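(* Let $p$ be an odd prime, $t,l\ge1$ odd integers, $0\le a\le b$ integers, $r=p^a(p-1)+l$, $s=p^b(p-1)+l$. Fix $k$ with $0\le k\le\lfloor t/2\rfloor$ and let $x=v_p\!\left(\binom t{2k}\frac{(2k)!}{k!(-24)^k}\right)$. Then for every $n\ge0$, $$(1-p^r)\binom t{2k}\frac{n!\,S_r^{(n+1)}(2k)!}{k!(-24)^k}\equiv(1-p^s)\binom t{2k}\frac{n!\,S_s^{(n+1)}(2k)!}{k!(-24)^k}\pmod{p^{a+x+1}},$$ meaning the difference of the two rational numbers has $p$-adic valuation at least $a+x+1$.
   Context: $S_r^{(n+1)}=\frac1{n!}\sum_{j=0}^{n}\binom nj(-1)^{n+j}(j+1)^{r-1}$. $v_p$ is the $p$-adic valuation on $\mathbb Q$. *)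

theory Defs
  imports "HOL-Computational_Algebra.Computational_Algebra"
begin

definition S :: "nat \<Rightarrow> nat \<Rightarrow> rat" where
  "S r m = (let n = m - 1 in
     (1 / fact n) * (\<Sum>j = 0..n. of_nat (n choose j) * (-1) ^ (n + j) * of_nat (j + 1) ^ (r - 1)))"

text \<open>p-adic valuation of a nonzero rational (value for 0 is irrelevant; callers guard q = 0).\<close>
definition padic_val :: "nat \<Rightarrow> rat \<Rightarrow> int" where
  "padic_val p q = (case quotient_of q of (num, den) \<Rightarrow>
      int (multiplicity (int p) num) - int (multiplicity (int p) den))"

end

theory Submission
  imports Defs "HOL-Number_Theory.Number_Theory"
begin

lemma padic_frac:
  fixes u v :: int
  assumes p: "prime p" and u: "u \<noteq> 0" and v: "v \<noteq> 0"
  shows "padic_val p (of_int u / of_int v) = int (multiplicity (int p) u) - int (multiplicity (int p) v)"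
proof -
  obtain nu de where q: "quotient_of (of_int u / of_int v) = (nu, de)" by (cases "quotient_of (of_int u / of_int v)") auto
  have de: "de > 0" using quotient_of_denom_pos[OF q] .
  have eq: "(of_int u / of_int v :: rat) = of_int nu / of_int de" using quotient_of_div[OF q] .
  have "(of_int u :: rat) * of_int de = of_int nu * of_int v"
    using eq u v de by (simp add: field_simps)
  hence e2: "u * de = nu * v" by (metis of_int_eq_iff of_int_mult)
  have nu: "nu \<noteq> 0" using e2 u de by auto
  have pe: "prime_elem (int p)" using p by simp
  have "multiplicity (int p) (u * de) = multiplicity (int p) (nu * v)" using e2 by simp
  hence "multiplicity (int p) u + multiplicity (int p) de = multiplicity (int p) nu + multiplicity (int p) v"
    using prime_elem_multiplicity_mult_distrib[OF pe] u v nu de by simp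
  thus ?thesis unfolding padic_val_def q by simp
qed

definition T :: "nat \<Rightarrow> nat \<Rightarrow> int" where
  "T r n = (\<Sum>j = 0..n. int (n choose j) * (-1) ^ (n + j) * int (j + 1) ^ (r - 1))"

lemma fact_S: "fact n * S r (n + 1) = of_int (T r n)"
  unfolding S_def T_def Let_def by simp

lemma pow_cong:
  fixes m :: nat
  assumes p: "prime p" and ab: "a \<le> b" and l: "l \<ge> 1"
  shows "[m ^ (p ^ a * (p - 1) + l - 1) = m ^ (p ^ b * (p - 1) + l - 1)] (mod p ^ (a + 1))"
proof -
  define e where "e = p ^ a * (p - 1)"
  have p2: "p \<ge> 2" using p prime_ge_2_nat by blast
  have "a < 2 ^ a" by (rule less_exp)
  also have "2 ^ a \<le> p ^ a" using p2 by (simp add: power_mono)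
  finally have "a < p ^ a" .
  moreover have "p ^ a * 1 \<le> p ^ a * (p - 1)" using p2 by (intro mult_le_mono2) simp
  ultimately have ea: "a + 1 \<le> e" unfolding e_def by linarith
  have sb: "p ^ b * (p - 1) = e * p ^ (b - a)" unfolding e_def using ab
    by (metis le_add_diff_inverse mult.assoc mult.commute power_add)
  show ?thesis
  proof (cases "p dvd m")
    case True
    have "p ^ (a+1) dvd m ^ (a+1)" using True by (rule dvd_power_same)
    hence d: "\<And>c. c \<ge> a + 1 \<Longrightarrow> p ^ (a+1) dvd m ^ c"
      by (metis dvd_trans le_imp_power_dvd)
    have "e * p ^ (b - a) \<ge> e" using p2 by simp
    hence g: "p ^ b * (p - 1) + l - 1 \<ge> a + 1" using sb ea l by linarith
    have g2: "p ^ a * (p - 1) + l - 1 \<ge> a + 1" using ea l unfolding e_def by linarith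
    have "p ^ (a+1) dvd m ^ (p ^ a * (p - 1) + l - 1)" "p ^ (a+1) dvd m ^ (p ^ b * (p - 1) + l - 1)"
      using d[OF g] d[OF g2] by auto
    hence "[m ^ (p ^ a * (p - 1) + l - 1) = 0] (mod p ^ (a+1))" "[m ^ (p ^ b * (p - 1) + l - 1) = 0] (mod p ^ (a+1))"
      by (simp_all add: cong_0_iff)
    thus ?thesis by (metis cong_sym cong_trans)
  next
    case False
    have cop: "coprime m (p ^ (a+1))" using False p
      by (simp add: prime_imp_coprime coprime_commute) (metis coprime_commute prime_imp_coprime)
    have "[m ^ totient (p ^ (a+1)) = 1] (mod p ^ (a+1))" by (rule euler_theorem[OF cop])
    hence me: "[m ^ e = 1] (mod p ^ (a+1))" using totient_prime_power_Suc[OF p, of a] unfolding e_def by simp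
    have "[m ^ e * m ^ (l - 1) = 1 * m ^ (l - 1)] (mod p ^ (a+1))" by (rule cong_mult[OF me cong_refl])
    hence c1: "[m ^ (p ^ a * (p - 1) + l - 1) = m ^ (l - 1)] (mod p ^ (a+1))"
      using l unfolding e_def by (simp add: power_add[symmetric])
    have "[(m ^ e) ^ p ^ (b - a) = 1 ^ p ^ (b - a)] (mod p ^ (a+1))" by (rule cong_pow[OF me])
    hence "[(m ^ e) ^ p ^ (b - a) * m ^ (l - 1) = 1 * m ^ (l - 1)] (mod p ^ (a+1))"
      by (intro cong_mult cong_refl) simp
    hence c2: "[m ^ (p ^ b * (p - 1) + l - 1) = m ^ (l - 1)] (mod p ^ (a+1))"
      using l sb by (simp add: power_add[symmetric] power_mult[symmetric])
    show ?thesis using c1 c2 by (metis cong_sym cong_trans)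
  qed
qed


lemma T_cong:
  assumes p: "prime p" and ab: "a \<le> b" and l: "l \<ge> 1"
  shows "[T (p ^ a * (p - 1) + l) n = T (p ^ b * (p - 1) + l) n] (mod int p ^ (a + 1))"
  unfolding T_def
proof (rule cong_sum, rule cong_mult[OF cong_refl])
  fix j
  have "[(j+1) ^ (p ^ a * (p - 1) + l - 1) = (j+1) ^ (p ^ b * (p - 1) + l - 1)] (mod p ^ (a + 1))"
    by (rule pow_cong[OF p ab l])
  hence "[int ((j+1) ^ (p ^ a * (p - 1) + l - 1)) = int ((j+1) ^ (p ^ b * (p - 1) + l - 1))] (mod int (p ^ (a + 1)))"
    by (simp only: cong_int_iff)
  thus "[int (j + 1) ^ (p ^ a * (p - 1) + l - 1) = int (j + 1) ^ (p ^ b * (p - 1) + l - 1)] (mod int p ^ (a + 1))"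
    by (simp only: of_nat_power)
qed

theorem mainTheorem7:
  fixes p t l a b k n :: nat
  assumes "prime p" and "odd p"
    and "odd t" and "odd l"
    and "a \<le> b"
    and "k \<le> t div 2"
  defines "r \<equiv> p ^ a * (p - 1) + l"
    and "s \<equiv> p ^ b * (p - 1) + l"
  defines "x \<equiv> padic_val p (of_nat (t choose (2 * k)) * fact (2 * k) / (fact k * (-24) ^ k))"
  shows "let d = (1 - of_nat p ^ r) * of_nat (t choose (2 * k)) * (fact n * S r (n + 1) * fact (2 * k)) / (fact k * (-24) ^ k)
               - (1 - of_nat p ^ s) * of_nat (t choose (2 * k)) * (fact n * S s (n + 1) * fact (2 * k)) / (fact k * (-24) ^ k)
         in d = 0 \<or> padic_val p d \<ge> int a + x + 1"
proof -
  have p: "prime p" by fact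
  have p2: "p \<ge> 2" using p prime_ge_2_nat by blast
  have l1: "l \<ge> 1" using assms(4) by (cases l) auto
  define N :: int where "N = (1 - int p ^ r) * T r n - (1 - int p ^ s) * T s n"
  define u :: int where "u = int (t choose (2 * k)) * fact (2 * k)"
  define v :: int where "v = fact k * (-24) ^ k"
  have v0: "v \<noteq> 0" unfolding v_def by simp
  have vq: "(of_int v :: rat) \<noteq> 0" using v0 by simp
  have xe: "x = padic_val p (of_int u / of_int v)" unfolding x_def u_def v_def by simp
  have "a < 2 ^ a" by (rule less_exp)
  also have "2 ^ a \<le> p ^ a" using p2 by (simp add: power_mono)
  finally have "a < p ^ a" .
  moreover have "p ^ a * 1 \<le> p ^ a * (p - 1)" using p2 by (intro mult_le_mono2) simp
  moreover have "p ^ a * (p - 1) \<le> p ^ b * (p - 1)" using p2 assms(5) by (intro mult_le_mono1 power_increasing) auto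
  ultimately have ar: "a + 1 \<le> r" and as: "a + 1 \<le> s" unfolding r_def s_def by linarith+
  have dr: "int p ^ (a+1) dvd int p ^ r" using ar by (rule le_imp_power_dvd)
  have ds: "int p ^ (a+1) dvd int p ^ s" using as by (rule le_imp_power_dvd)
  have tc: "int p ^ (a+1) dvd T r n - T s n"
    using T_cong[OF p assms(5) l1, of n] unfolding r_def s_def by (simp add: cong_iff_dvd_diff)
  have Ne: "N = (T r n - T s n) - int p ^ r * T r n + int p ^ s * T s n"
    unfolding N_def by (simp add: algebra_simps)
  have Nd: "int p ^ (a+1) dvd N" unfolding Ne by (rule dvd_add[OF dvd_diff[OF tc dvd_mult2[OF dr]] dvd_mult2[OF ds]])
    let ?d = "(1 - of_nat p ^ r) * of_nat (t choose (2 * k)) * (fact n * S r (n + 1) * fact (2 * k)) / (fact k * (-24) ^ k)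
               - (1 - of_nat p ^ s) * of_nat (t choose (2 * k)) * (fact n * S s (n + 1) * fact (2 * k)) / (fact k * (-24) ^ k) :: rat"
  show ?thesis
  proof (cases "?d = 0")
    case True thus ?thesis by (simp add: Let_def)
  next
    case False
    hence nz: "?d \<noteq> 0" .
    have deq: "?d = of_int (u * N) / of_int v"
      unfolding fact_S N_def u_def v_def by (simp add: field_simps)
    have uN: "u * N \<noteq> 0" using nz deq by auto
    hence u0: "u \<noteq> 0" and N0: "N \<noteq> 0" by auto
    have pe: "prime_elem (int p)" using p by simp
    have nu: "\<not> is_unit (int p)" using p2 by simp
    have mN: "multiplicity (int p) N \<ge> a + 1" using multiplicity_geI[OF N0 nu Nd] .
    have "padic_val p ?d = int (multiplicity (int p) (u * N)) - int (multiplicity (int p) v)"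
      unfolding deq by (rule padic_frac[OF p uN v0])
    also have "\<dots> = int (multiplicity (int p) u) + int (multiplicity (int p) N) - int (multiplicity (int p) v)"
      using prime_elem_multiplicity_mult_distrib[OF pe u0 N0] by simp
    finally have "int a + x + 1 \<le> padic_val p ?d"
      unfolding xe padic_frac[OF p u0 v0] using mN by linarith
    thus ?thesis by (simp add: Let_def)
  qed
qed

end
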